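(* Let $D=(V,A)$ be a digraph with minimum dicut size $\tau$, and let $\vec G=(V,A\cup A^{-1})$ with weight $w^D$ be as in the context. For every integer $k\le\tau$, $D$ contains $k$ pairwise arc-disjoint dijoins if and only if $\vec G$ with weight $w^D$ can pack $k$ strongly connected digraphs, i.e. there exist arc subsets $F_1,\dots,F_k\subseteq A\cup A^{-1}$, each satisfying $\delta^+_{\vec G}(U)\cap F_i\neq\emptyset$ for all $\emptyset\neq U\subsetneq V$, such that every arc $e$ of $\vec G$ belongs to at most $w^D_e$ of the sets $F_i$.
   Context: Digraphs are finite and loopless; parallel arcs allowed. For $\emptyset\neq U\subsetneq V$, $\delta^+(U)$ / $\delta^-(U)$ denote arcs leaving/entering $U$. A dicut of $D$ is $\delta^+_D(U)$ with $\emptyset\neq U\subsetneq V$ and $\delta^-_D(U)=\emptyset$; a dijoin is an arc set meeting every dicut; "$D$ has minimum dicut size $\tau$" means $D$ has at least one dicut and the minimum number of arcs in a dicut is $\tau$. $A^{-1}$ denotes the set of reverses of the arcs of $A$ (one reverse arc $a^{-1}$ per arc $a\in A$, considered distinct from arcs of $A$). The digraph $\vec G$ has vertex set $V$ and arc set $A\cup A^{-1}$, and the weight $w^D$ is defined by $w^D_a=\tau$ for $a\in A$ and $w^D_{a^{-1}}=1$ for $a^{-1}\in A^{-1}$. *)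

theory Defs
  imports Main
begin

text \<open>A digraph is given by a finite vertex set V, a finite set of arc names A
(allowing parallel arcs), and tail/head maps. Loopless: tail differs from head.\<close>

definition digraph :: "'v set \<Rightarrow> 'e set \<Rightarrow> ('e \<Rightarrow> 'v) \<Rightarrow> ('e \<Rightarrow> 'v) \<Rightarrow> bool" where
  "digraph V A tail head \<longleftrightarrow> finite V \<and> finite A \<and>
     (\<forall>a\<in>A. tail a \<in> V \<and> head a \<in> V \<and> tail a \<noteq> head a)"

definition out_arcs :: "'e set \<Rightarrow> ('e \<Rightarrow> 'v) \<Rightarrow> ('e \<Rightarrow> 'v) \<Rightarrow> 'v set \<Rightarrow> 'e set" where
  "out_arcs A tail head U = {a\<in>A. tail a \<in> U \<and> head a \<notin> U}"

definition in_arcs :: "'e set \<Rightarrow> ('e \<Rightarrow> 'v) \<Rightarrow> ('e \<Rightarrow> 'v) \<Rightarrow> 'v set \<Rightarrow> 'e set" where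
  "in_arcs A tail head U = {a\<in>A. tail a \<notin> U \<and> head a \<in> U}"

definition is_dicut :: "'v set \<Rightarrow> 'e set \<Rightarrow> ('e \<Rightarrow> 'v) \<Rightarrow> ('e \<Rightarrow> 'v) \<Rightarrow> 'e set \<Rightarrow> bool" where
  "is_dicut V A tail head C \<longleftrightarrow> (\<exists>U. U \<noteq> {} \<and> U \<subset> V \<and> in_arcs A tail head U = {} \<and> C = out_arcs A tail head U)"

definition is_dijoin :: "'v set \<Rightarrow> 'e set \<Rightarrow> ('e \<Rightarrow> 'v) \<Rightarrow> ('e \<Rightarrow> 'v) \<Rightarrow> 'e set \<Rightarrow> bool" where
  "is_dijoin V A tail head J \<longleftrightarrow> J \<subseteq> A \<and> (\<forall>C. is_dicut V A tail head C \<longrightarrow> J \<inter> C \<noteq> {})"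

definition min_dicut_size :: "'v set \<Rightarrow> 'e set \<Rightarrow> ('e \<Rightarrow> 'v) \<Rightarrow> ('e \<Rightarrow> 'v) \<Rightarrow> nat \<Rightarrow> bool" where
  "min_dicut_size V A tail head \<tau> \<longleftrightarrow> (\<exists>C. is_dicut V A tail head C) \<and>
     \<tau> = Min (card ` {C. is_dicut V A tail head C})"

text \<open>The bidirected digraph: arcs Inl a (original) and Inr a (the reverse a^-1).\<close>
definition bi_arcs :: "'e set \<Rightarrow> ('e + 'e) set" where
  "bi_arcs A = Inl ` A \<union> Inr ` A"

fun bi_tail :: "('e \<Rightarrow> 'v) \<Rightarrow> ('e \<Rightarrow> 'v) \<Rightarrow> 'e + 'e \<Rightarrow> 'v" where
  "bi_tail tail head (Inl a) = tail a"
| "bi_tail tail head (Inr a) = head a"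

fun bi_head :: "('e \<Rightarrow> 'v) \<Rightarrow> ('e \<Rightarrow> 'v) \<Rightarrow> 'e + 'e \<Rightarrow> 'v" where
  "bi_head tail head (Inl a) = head a"
| "bi_head tail head (Inr a) = tail a"

fun wD :: "nat \<Rightarrow> 'e + 'e \<Rightarrow> nat" where
  "wD \<tau> (Inl a) = \<tau>"
| "wD \<tau> (Inr a) = 1"

end

theory Submission
  imports Defs
begin

lemma card_le1: assumes "\<forall>i\<in>S. \<forall>j\<in>S. i = j" shows "card S \<le> (1::nat)"
  proof (cases "finite S")
  case True then show ?thesis using assms card_le_Suc0_iff_eq[OF True] by simp
qed simp

theorem proposition2:
  fixes V :: "'v set" and A :: "'e set" and tail head :: "'e \<Rightarrow> 'v"
    and \<tau> k :: nat
  assumes "digraph V A tail head"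
    and "min_dicut_size V A tail head \<tau>"
    and "k \<le> \<tau>"
  shows "(\<exists>J :: nat \<Rightarrow> 'e set.
            (\<forall>i<k. is_dijoin V A tail head (J i)) \<and>
            (\<forall>i<k. \<forall>j<k. i \<noteq> j \<longrightarrow> J i \<inter> J j = {}))
     \<longleftrightarrow>
         (\<exists>F :: nat \<Rightarrow> ('e + 'e) set.
            (\<forall>i<k. F i \<subseteq> bi_arcs A \<and>
               (\<forall>U. U \<noteq> {} \<and> U \<subset> V \<longrightarrow>
                  out_arcs (bi_arcs A) (bi_tail tail head) (bi_head tail head) U \<inter> F i \<noteq> {})) \<and>
            (\<forall>e\<in>bi_arcs A. card {i. i < k \<and> e \<in> F i} \<le> wD \<tau> e))"
proof
  assume "\<exists>J. (\<forall>i<k. is_dijoin V A tail head (J i)) \<and> (\<forall>i<k. \<forall>j<k. i \<noteq> j \<longrightarrow> J i \<inter> J j = {})"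
  then obtain J where J: "\<forall>i<k. is_dijoin V A tail head (J i)"
     and D: "\<forall>i<k. \<forall>j<k. i \<noteq> j \<longrightarrow> J i \<inter> J j = {}" by blast
  define F where "F i = Inl ` A \<union> Inr ` J i" for i
  show "\<exists>F :: nat \<Rightarrow> ('e + 'e) set.
            (\<forall>i<k. F i \<subseteq> bi_arcs A \<and>
               (\<forall>U. U \<noteq> {} \<and> U \<subset> V \<longrightarrow>
                  out_arcs (bi_arcs A) (bi_tail tail head) (bi_head tail head) U \<inter> F i \<noteq> {})) \<and>
            (\<forall>e\<in>bi_arcs A. card {i. i < k \<and> e \<in> F i} \<le> wD \<tau> e)"
  proof (intro exI[of _ F] conjI allI impI ballI)
    fix i assume i: "i < k"
    have Ji: "is_dijoin V A tail head (J i)" using J i by blast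
    then show "F i \<subseteq> bi_arcs A" unfolding F_def bi_arcs_def is_dijoin_def by blast
    fix U assume U: "U \<noteq> {} \<and> U \<subset> V"
    show "out_arcs (bi_arcs A) (bi_tail tail head) (bi_head tail head) U \<inter> F i \<noteq> {}"
    proof (cases "out_arcs A tail head U = {}")
      case False
      then obtain a where a: "a \<in> A" "tail a \<in> U" "head a \<notin> U" unfolding out_arcs_def by blast
      then have "Inl a \<in> out_arcs (bi_arcs A) (bi_tail tail head) (bi_head tail head) U \<inter> F i"
        unfolding out_arcs_def bi_arcs_def F_def by auto
      then show ?thesis by blast
    next
      case True
      have "in_arcs A tail head (V - U) = {}"
      proof -
        have "\<And>a. a \<in> A \<Longrightarrow> tail a \<notin> V - U \<Longrightarrow> head a \<in> V - U \<Longrightarrow> False"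
        proof -
          fix a assume "a \<in> A" "tail a \<notin> V - U" "head a \<in> V - U"
          moreover have "tail a \<in> V" using assms(1) \<open>a \<in> A\<close> unfolding digraph_def by blast
          ultimately have "a \<in> out_arcs A tail head U" unfolding out_arcs_def by blast
          then show False using True by blast
        qed
        then show ?thesis unfolding in_arcs_def by blast
      qed
      moreover have "V - U \<noteq> {}" using U by auto
      moreover have "V - U \<subset> V" using U by auto
      ultimately have "is_dicut V A tail head (out_arcs A tail head (V - U))"
        unfolding is_dicut_def by (intro exI[of _ "V - U"]) simp
      then obtain a where a: "a \<in> J i" "a \<in> out_arcs A tail head (V - U)"
        using Ji unfolding is_dijoin_def by blast
      have "head a \<in> V" using assms(1) a(2) unfolding digraph_def out_arcs_def by blast
      then have "Inr a \<in> out_arcs (bi_arcs A) (bi_tail tail head) (bi_head tail head) U \<inter> F i"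
        using U a unfolding out_arcs_def bi_arcs_def F_def by auto
      then show ?thesis by blast
    qed
  next
    fix e assume e: "e \<in> bi_arcs A"
    show "card {i. i < k \<and> e \<in> F i} \<le> wD \<tau> e"
    proof (cases e)
      case (Inl a)
      have "card {i. i < k \<and> e \<in> F i} \<le> card {..<k}"
        by (rule card_mono) auto
      then show ?thesis using Inl assms(3) by simp
    next
      case (Inr a)
      have "\<forall>i\<in>{i. i < k \<and> e \<in> F i}. \<forall>j\<in>{i. i < k \<and> e \<in> F i}. i = j"
        using D Inr unfolding F_def by blast
      then have "card {i. i < k \<and> e \<in> F i} \<le> 1" by (rule card_le1)
      then show ?thesis using Inr by simp
    qed
  qed
next
  assume "\<exists>F :: nat \<Rightarrow> ('e + 'e) set.
            (\<forall>i<k. F i \<subseteq> bi_arcs A \<and>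
               (\<forall>U. U \<noteq> {} \<and> U \<subset> V \<longrightarrow>
                  out_arcs (bi_arcs A) (bi_tail tail head) (bi_head tail head) U \<inter> F i \<noteq> {})) \<and>
            (\<forall>e\<in>bi_arcs A. card {i. i < k \<and> e \<in> F i} \<le> wD \<tau> e)"
  then obtain F :: "nat \<Rightarrow> ('e + 'e) set" where
    F1: "\<forall>i<k. F i \<subseteq> bi_arcs A \<and>
               (\<forall>U. U \<noteq> {} \<and> U \<subset> V \<longrightarrow>
                  out_arcs (bi_arcs A) (bi_tail tail head) (bi_head tail head) U \<inter> F i \<noteq> {})"
    and F2: "\<forall>e\<in>bi_arcs A. card {i. i < k \<and> e \<in> F i} \<le> wD \<tau> e" by blast
  define J where "J i = {a\<in>A. Inr a \<in> F i}" for i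
  show "\<exists>J. (\<forall>i<k. is_dijoin V A tail head (J i)) \<and> (\<forall>i<k. \<forall>j<k. i \<noteq> j \<longrightarrow> J i \<inter> J j = {})"
  proof (intro exI[of _ J] conjI allI impI)
    fix i assume i: "i < k"
    show "is_dijoin V A tail head (J i)"
      unfolding is_dijoin_def
    proof (intro conjI allI impI)
      show "J i \<subseteq> A" unfolding J_def by blast
      fix C assume "is_dicut V A tail head C"
      then obtain U where U: "U \<noteq> {}" "U \<subset> V" "in_arcs A tail head U = {}"
        "C = out_arcs A tail head U" unfolding is_dicut_def by blast
      have "V - U \<noteq> {} \<and> V - U \<subset> V" using U by auto
      moreover have "\<forall>U. U \<noteq> {} \<and> U \<subset> V \<longrightarrow>
                  out_arcs (bi_arcs A) (bi_tail tail head) (bi_head tail head) U \<inter> F i \<noteq> {}"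
        using F1 i by simp
      ultimately have "out_arcs (bi_arcs A) (bi_tail tail head) (bi_head tail head) (V - U) \<inter> F i \<noteq> {}"
        by simp
      then obtain e where e: "e \<in> out_arcs (bi_arcs A) (bi_tail tail head) (bi_head tail head) (V - U)"
        "e \<in> F i" by blast
      show "J i \<inter> C \<noteq> {}"
      proof (cases e)
        case (Inl a)
        with e have a: "a \<in> A" "tail a \<in> V - U" "head a \<notin> V - U"
          unfolding out_arcs_def bi_arcs_def by auto
        have "head a \<in> V" using assms(1) a(1) unfolding digraph_def by blast
        then have "a \<in> in_arcs A tail head U" using a unfolding in_arcs_def by blast
        then show ?thesis using U(3) by blast
      next
        case (Inr a)
        with e have a: "a \<in> A" "head a \<in> V - U" "tail a \<notin> V - U"
          unfolding out_arcs_def bi_arcs_def by auto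
        have "tail a \<in> V" using assms(1) a(1) unfolding digraph_def by blast
        then have "a \<in> C" using a U(4) unfolding out_arcs_def by blast
        moreover have "a \<in> J i" using Inr e a unfolding J_def by blast
        ultimately show ?thesis by blast
      qed
    qed
  next
    fix i j assume ij: "i < k" "j < k" "i \<noteq> j"
    show "J i \<inter> J j = {}"
    proof (rule ccontr)
      assume "J i \<inter> J j \<noteq> {}"
      then obtain a where a: "a \<in> A" "Inr a \<in> F i" "Inr a \<in> F j" unfolding J_def by blast
      have "{i, j} \<subseteq> {l. l < k \<and> Inr a \<in> F l}" using a ij by auto
      then have "card {i, j} \<le> card {l. l < k \<and> Inr a \<in> F l}" by (rule card_mono[rotated]) auto
      moreover have "Inr a \<in> bi_arcs A" using a unfolding bi_arcs_def by blast
      ultimately show False using F2 ij by fastforce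
    qed
  qed
qed

end
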